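(* In the setting described in the context, assume moreover $b\ge1000\log^2n$. Then: 1. $\|\overline s^{-1}\widetilde\delta_s\|_2\le2\epsilon$, $\|\overline x^{-1}\widetilde\delta_x\|_2\le2\epsilon$, $\|\mathbb E[\overline s^{-1}\widehat\delta_s]\|_2\le2\epsilon$, $\|\mathbb E[\overline x^{-1}\widehat\delta_x]\|_2\le2\epsilon$, $\|\overline\mu^{-1}(\widetilde\delta_t-\overline\delta_t)\|_2\le\epsilon_{\mathrm{mp}}\epsilon$, and $\|\overline\mu^{-1}(\overline\delta_t+\widetilde\delta_\Phi)\|_2\le5\epsilon$. 2. For every $i\in[n]$: $\operatorname{Var}[\overline x_i^{-1}\widehat\delta_{x,i}]\le2\epsilon^2/b$ and $\operatorname{Var}[\overline s_i^{-1}\widehat\delta_{s,i}]\le2\epsilon^2/b$. 3. $\|\overline x^{-1}(\overline x-\widetilde x)\|_\infty\le2\epsilon_{\mathrm{mp}}$, $\|\overline s^{-1}(\overline s-\widetilde s)\|_\infty\le2\epsilon_{\mathrm{mp}}$, $\|\overline x^{-1}\widetilde\delta_x\|_\infty\le2\epsilon$, $\|\overline s^{-1}\widetilde\delta_s\|_\infty\le2\epsilon$, and $\|\overline\mu^{-1}\widetilde\delta_\mu\|_\infty\le5\epsilon$. 4. $\|\overline x^{-1}\widehat\delta_x\|_\infty\le3\epsilon$ and $\|\overline s^{-1}\widehat\delta_s\|_\infty\le3\epsilon$ hold with probability $1-1/n^4$.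
   Context: Let $n\ge2$ and $A\in\mathbb{R}^{d\times n}$ have full row rank $d\le n$. Products, quotients, square roots and inverses of vectors are coordinatewise; for $u\in\mathbb{R}^n$, the capital letter $U$ denotes $\operatorname{diag}(u)$. For $u\in\mathbb{R}^n_{>0}$ and $v\in\mathbb{R}^n_{>0}$ (or a scalar $v>0$, identified with $v\mathbf 1$), $u\approx_\gamma v$ means $(1-\gamma)v_i\le u_i\le(1+\gamma)v_i$ for all $i$. Parameters: $\epsilon,\epsilon_{\mathrm{mp}}\in(0,10^{-4})$, $\lambda>\log n$; $\Phi_\lambda(r)=\sum_{i=1}^n\cosh(\lambda r_i)$, with $\nabla\Phi_\lambda(r)=(\lambda\sinh(\lambda r_i))_i$. Let $t>0$, $t^{\mathrm{new}}=(1-\frac{\epsilon}{3\sqrt n})t$. Let $\overline x,\overline s\in\mathbb{R}^n_{>0}$, $\overline w=\overline x/\overline s$, $\overline\mu=\overline x\,\overline s$, $\overline\delta_t=(\frac{t^{\mathrm{new}}}{t}-1)\overline\mu$. Let $\widetilde w,\widetilde\mu\in\mathbb{R}^n_{>0}$ satisfy $\widetilde\mu\approx_{\epsilon_{\mathrm{mp}}}\overline\mu$, $\widetilde w\approx_{\epsilon_{\mathrm{mp}}}\overline w$, and $\overline\mu\approx_{0.1}t$. Define $\widetilde x=\sqrt{\widetilde w\widetilde\mu}$, $\widetilde s=\sqrt{\widetilde\mu/\widetilde w}$, $\widetilde P=\widetilde W^{1/2}A^\top(A\widetilde WA^\top)^{-1}A\widetilde W^{1/2}$, $\widetilde\delta_t=(\frac{t^{\mathrm{new}}}{t}-1)\widetilde\mu$,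 $\widetilde\delta_\Phi=-\frac\epsilon2t^{\mathrm{new}}\frac{\nabla\Phi_\lambda(\widetilde\mu/t-1)}{\|\nabla\Phi_\lambda(\widetilde\mu/t-1)\|_2}$ (the gradient is assumed nonzero), $\widetilde\delta_\mu=\widetilde\delta_t+\widetilde\delta_\Phi$, $\widetilde\delta_x=\widetilde X(\widetilde X\widetilde S)^{-1/2}(I-\widetilde P)(\widetilde X\widetilde S)^{-1/2}\widetilde\delta_\mu$, $\widetilde\delta_s=\widetilde S(\widetilde X\widetilde S)^{-1/2}\widetilde P(\widetilde X\widetilde S)^{-1/2}\widetilde\delta_\mu$. Let $R\in\mathbb{R}^{b\times n}$ be a random subsampled randomized Hadamard transform; it satisfies, for every fixed $h\in\mathbb{R}^n$, every $i$ and every $\delta\in(0,1)$: $\mathbb E[R^\top Rh]=h$, $\mathbb E[(R^\top Rh)_i^2]\le h_i^2+\frac1b\|h\|_2^2$, and $\Pr[|(R^\top Rh)_i-h_i|>\|h\|_2\log(n/\delta)/\sqrt b]\le\delta$. Define $\widehat\delta_x=\widetilde X(\widetilde X\widetilde S)^{-1/2}(I-R^\top R\widetilde P)(\widetilde X\widetilde S)^{-1/2}\widetilde\delta_\mu$ and $\widehat\delta_s=\widetilde S(\widetilde X\widetilde S)^{-1/2}R^\top R\widetilde P(\widetilde X\widetilde S)^{-1/2}\widetilde\delta_\mu$. Expectations, variances and probabilities are over the randomness of $R$; all other quantities are deterministic. *)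

theory Defs
  imports "HOL-Analysis.Analysis" "HOL-Probability.Probability"
begin

definition vdiag :: "real^'n \<Rightarrow> real^'n^'n" where
  "vdiag u = (\<chi> i j. if i = j then u$i else 0)"

definition vmul :: "real^'n \<Rightarrow> real^'n \<Rightarrow> real^'n" where
  "vmul u v = (\<chi> i. u$i * v$i)"

definition vdiv :: "real^'n \<Rightarrow> real^'n \<Rightarrow> real^'n" where
  "vdiv u v = (\<chi> i. u$i / v$i)"

definition vsqrt :: "real^'n \<Rightarrow> real^'n" where
  "vsqrt u = (\<chi> i. sqrt (u$i))"

definition vinv :: "real^'n \<Rightarrow> real^'n" where
  "vinv u = (\<chi> i. 1 / u$i)"

definition vpos :: "real^'n \<Rightarrow> bool" where
  "vpos u \<longleftrightarrow> (\<forall>i. u$i > 0)"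

definition approx_vec :: "real \<Rightarrow> real^'n \<Rightarrow> real^'n \<Rightarrow> bool" where
  "approx_vec \<gamma> u v \<longleftrightarrow> (\<forall>i. (1-\<gamma>) * v$i \<le> u$i \<and> u$i \<le> (1+\<gamma>) * v$i)"

text \<open>Gradient of Phi_lambda(r) = sum_i cosh(lambda r_i).\<close>
definition gradPhi :: "real \<Rightarrow> real^'n \<Rightarrow> real^'n" where
  "gradPhi lam r = (\<chi> i. lam * sinh (lam * r$i))"

end

theory Submission
  imports Defs
begin


lemma if_times0: "(if P then a else (0::real)) * b = (if P then a * b else 0)" by simp

lemma vdiag_mult: "vdiag u ** vdiag v = vdiag (vmul u v)"
  by (auto simp: vdiag_def vmul_def matrix_matrix_mult_def vec_eq_iff if_times0 sum.delta)

lemma vdiag_transpose: "transpose (vdiag u) = vdiag u"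
  by (simp add: vdiag_def transpose_def vec_eq_iff)

lemma vdiag_mv: "(vdiag u *v x) $ i = u$i * x$i"
  by (simp add: vdiag_def matrix_vector_mult_def if_times0 sum.delta)

lemma proj_props:
  fixes A :: "real^'n^'d" and w :: "real^'n"
  assumes rk: "rank A = CARD('d)" and w: "vpos w"
  defines "P \<equiv> vdiag (vsqrt w) ** transpose A ** matrix_inv (A ** vdiag w ** transpose A) ** A ** vdiag (vsqrt w)"
  shows "transpose P = P" "P ** P = P"
proof -
  define D where "D = vdiag (vsqrt w)"
  define B where "B = A ** D"
  have DD: "D ** D = vdiag w"
    unfolding D_def vdiag_mult using w by (simp add: vpos_def vmul_def vsqrt_def vec_eq_iff less_imp_le)
  have DT: "transpose D = D" by (simp add: D_def vdiag_transpose)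
  define M where "M = A ** vdiag w ** transpose A"
  have MB: "M = B ** transpose B"
    by (simp add: M_def B_def matrix_transpose_mul DT flip: DD matrix_mul_assoc)
  have MT: "transpose M = M" by (simp add: MB matrix_transpose_mul)
  define Di where "Di = vdiag (vinv (vsqrt w))"
  have DDi: "D ** Di = mat 1"
    unfolding D_def Di_def vdiag_mult using w
    by (auto simp: vpos_def vmul_def vsqrt_def vinv_def vec_eq_iff vdiag_def mat_def) (metis less_irrefl)
  have "rank A = rank (B ** Di)" by (simp add: B_def DDi flip: matrix_mul_assoc)
  also have "\<dots> \<le> rank B" by (rule rank_mul_le_left)
  finally have "rank (transpose B) = CARD('d)"
    using rank_bound[of B] rk by (simp add: rank_transpose)
  then have injBT: "inj ((*v) (transpose B))" by (simp add: full_rank_injective)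
  have "inj ((*v) M)"
  proof (rule linear_injective_0[THEN iffD2])
    show "linear ((*v) M)" by (simp add: matrix_vector_mul_linear)
    show "\<forall>x. M *v x = 0 \<longrightarrow> x = 0"
    proof (intro allI impI)
      fix x assume "M *v x = 0"
      have e: "B *v (transpose B *v x) = 0" using \<open>M *v x = 0\<close> by (simp only: MB matrix_vector_mul_assoc)
      have "(transpose B *v x) \<bullet> (transpose B *v x) = x \<bullet> (B *v (transpose B *v x))"
        using dot_lmul_matrix[of x B "transpose B *v x"] by (simp only: transpose_matrix_vector)
      then have "(transpose B *v x) \<bullet> (transpose B *v x) = 0" by (simp only: e inner_zero_right)
      then have "transpose B *v x = 0" by simp
      then show "x = 0" using injBT by (metis inj_eq matrix_vector_mult_0_right)
    qed
  qed
  then obtain L where "L ** M = mat 1" using matrix_left_invertible_injective by blast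
  then have invM: "invertible M" using invertible_left_inverse by blast
  define Mi where "Mi = matrix_inv M"
  have Mi: "M ** Mi = mat 1 \<and> Mi ** M = mat 1"
    unfolding Mi_def matrix_inv_def using invM unfolding invertible_def by (rule someI_ex)
  have "transpose Mi ** M = mat 1"
    using Mi by (metis MT matrix_transpose_mul transpose_mat)
  then have MiT: "transpose Mi = Mi"
    by (metis Mi matrix_mul_assoc matrix_mul_lid matrix_mul_rid)
  have P: "P = transpose B ** Mi ** B"
    by (simp add: P_def Mi_def M_def B_def matrix_transpose_mul vdiag_transpose matrix_mul_assoc D_def)
  show "transpose P = P" by (simp add: P matrix_transpose_mul MiT matrix_mul_assoc)
  have "P ** P = transpose B ** Mi ** (B ** transpose B) ** Mi ** B"
    by (simp add: P matrix_mul_assoc)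
  also have "\<dots> = transpose B ** (Mi ** M ** Mi) ** B" by (simp add: MB matrix_mul_assoc)
  also have "\<dots> = P" using Mi by (simp add: P)
  finally show "P ** P = P" .
qed

lemma proj_norm:
  fixes P :: "real^'n^'n"
  assumes "transpose P = P" "P ** P = P"
  shows "norm (P *v v) \<le> norm v" "norm (v - P *v v) \<le> norm v"
proof -
  have "(P *v v) \<bullet> (v - P *v v) = v \<bullet> (P *v (v - P *v v))"
    by (metis assms(1) dot_lmul_matrix vector_transpose_matrix)
  also have "\<dots> = 0" by (simp add: matrix_vector_mult_diff_distrib matrix_vector_mul_assoc assms(2))
  finally have "norm (P *v v + (v - P *v v))^2 = norm (P *v v)^2 + norm (v - P *v v)^2"
    using norm_add_Pythagorean[of "P *v v" "v - P *v v"] by (simp add: orthogonal_def)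
  then have "norm v ^2 = norm (P *v v)^2 + norm (v - P *v v)^2" by simp
  then show "norm (P *v v) \<le> norm v" "norm (v - P *v v) \<le> norm v"
    by (smt (verit) norm_ge_zero power2_le_imp_le zero_le_power2)+
qed

lemma norm_scaled_le:
  fixes x y :: "real^'n"
  assumes "c \<ge> 0" "\<And>i. \<bar>x$i\<bar> \<le> c * \<bar>y$i\<bar>"
  shows "norm x \<le> c * norm y"
proof -
  have "norm x \<le> norm (c *\<^sub>R y)" by (rule norm_le_componentwise_cart) (use assms in \<open>simp add: abs_mult\<close>)
  then show ?thesis using assms(1) by simp
qed
lemma norm_const_vec: "norm ((\<chi> (i::'n::finite). (c::real))) = \<bar>c\<bar> * sqrt (real CARD('n))"
  by (simp add: norm_vec_def L2_set_def real_sqrt_mult mult.commute)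
lemma infnorm_le_cart:
  fixes x :: "real^'n"
  assumes "\<And>i. \<bar>x$i\<bar> \<le> B" shows "infnorm x \<le> B"
  unfolding infnorm_cart by (rule cSup_least) (use assms in auto)
lemma expect_comp:
  fixes p :: "'a pmf" and f :: "'a \<Rightarrow> real^'n"
  assumes "finite (set_pmf p)"
  shows "measure_pmf.expectation p (\<lambda>R. f R $ i) = (measure_pmf.expectation p f) $ i"
proof -
  have "integral\<^sup>L p (\<lambda>R. (\<lambda>x. x$i) (f R)) = (\<lambda>x. x$i) (integral\<^sup>L p f)"
    by (rule integral_bounded_linear[OF bounded_linear_vec_nth integrable_measure_pmf_finite[OF assms]])
  then show ?thesis by simp
qed
lemma var_affine_pmf:
  fixes p :: "'a pmf" and y :: "'a \<Rightarrow> real"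
  assumes fin: "finite (set_pmf p)" and m: "measure_pmf.expectation p y = m"
  shows "measure_pmf.variance p (\<lambda>R. \<alpha> + \<beta> * y R) = \<beta>^2 * (measure_pmf.expectation p (\<lambda>R. (y R)^2) - m^2)"
proof -
  have I: "\<And>f::'a\<Rightarrow>real. integrable p f" by (rule integrable_measure_pmf_finite[OF fin])
  have e1: "measure_pmf.expectation p (\<lambda>R. \<alpha> + \<beta> * y R) = \<alpha> + \<beta> * m"
    using m by (simp add: I)
  have "(\<lambda>R. (\<alpha> + \<beta> * y R)^2) = (\<lambda>R. \<alpha>^2 + (2*\<alpha>*\<beta>) * y R + \<beta>^2 * (y R)^2)"
    by (auto simp: power2_eq_square algebra_simps)
  note feq = this
  have e2: "measure_pmf.expectation p (\<lambda>R. (\<alpha> + \<beta> * y R)^2) = \<alpha>^2 + (2*\<alpha>*\<beta>) * m + \<beta>^2 * measure_pmf.expectation p (\<lambda>R. (y R)^2)"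
  proof -
    have "measure_pmf.expectation p (\<lambda>R. \<alpha>^2 + (2*\<alpha>*\<beta>) * y R + \<beta>^2 * (y R)^2) = \<alpha>^2 + (2*\<alpha>*\<beta>) * measure_pmf.expectation p y + \<beta>^2 * measure_pmf.expectation p (\<lambda>R. (y R)^2)"
      by (simp add: I)
    then have "measure_pmf.expectation p (\<lambda>R. \<alpha>^2 + (2*\<alpha>*\<beta>) * y R + \<beta>^2 * (y R)^2) = \<alpha>^2 + (2*\<alpha>*\<beta>) * m + \<beta>^2 * measure_pmf.expectation p (\<lambda>R. (y R)^2)"
      by (simp add: m)
    then show ?thesis by (simp only: feq)
  qed
  show ?thesis
    by (subst measure_pmf.variance_eq) (simp_all add: I e1 e2 m power2_eq_square algebra_simps)
qed


theorem lemmaB16: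
  fixes A :: "real^'n^'d"
    and p :: "(real^'n^'b) pmf"
    and eps eps_mp lam t :: real
    and xbar sbar wt mut :: "real^'n"
  defines "n \<equiv> real CARD('n)"
    and "b \<equiv> real CARD('b)"
  defines "tnew \<equiv> (1 - eps / (3 * sqrt n)) * t"
    and "wbar \<equiv> vdiv xbar sbar"
    and "mubar \<equiv> vmul xbar sbar"
  defines "dbar_t \<equiv> (tnew / t - 1) *\<^sub>R mubar"
    and "xt \<equiv> vsqrt (vmul wt mut)"
    and "st \<equiv> vsqrt (vdiv mut wt)"
    and "Pt \<equiv> vdiag (vsqrt wt) ** transpose A ** matrix_inv (A ** vdiag wt ** transpose A)
               ** A ** vdiag (vsqrt wt)"
    and "dt_t \<equiv> (tnew / t - 1) *\<^sub>R mut"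
    and "g \<equiv> gradPhi lam (\<chi> i. mut$i / t - 1)"
  defines "dt_Phi \<equiv> (- (eps / 2) * tnew / norm g) *\<^sub>R g"
  defines "dt_mu \<equiv> dt_t + dt_Phi"
    and "XSh \<equiv> vdiag (vinv (vsqrt (vmul xt st)))"
  defines "dt_x \<equiv> (vdiag xt ** XSh ** (mat 1 - Pt) ** XSh) *v dt_mu"
    and "dt_s \<equiv> (vdiag st ** XSh ** Pt ** XSh) *v dt_mu"
    and "dh_x \<equiv> (\<lambda>R::real^'n^'b. (vdiag xt ** XSh ** (mat 1 - transpose R ** R ** Pt) ** XSh) *v dt_mu)"
    and "dh_s \<equiv> (\<lambda>R::real^'n^'b. (vdiag st ** XSh ** (transpose R ** R ** Pt) ** XSh) *v dt_mu)"
  assumes n2: "CARD('n) \<ge> 2"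
    and d_le_n: "CARD('d) \<le> CARD('n)"
    and full_rank: "rank A = CARD('d)"
    and eps: "0 < eps" "eps < 10 powr -4"
    and eps_mp: "0 < eps_mp" "eps_mp < 10 powr -4"
    and lam: "lam > ln n"
    and t_pos: "t > 0"
    and pos: "vpos xbar" "vpos sbar" "vpos wt" "vpos mut"
    and approx_mu: "approx_vec eps_mp mut mubar"
    and approx_w: "approx_vec eps_mp wt wbar"
    and approx_t: "approx_vec 0.1 mubar (\<chi> i. t)"
    and g_nz: "g \<noteq> 0"
    and finite_R: "finite (set_pmf p)"
    and R_mean: "\<And>h::real^'n. measure_pmf.expectation p (\<lambda>R. (transpose R ** R) *v h) = h"
    and R_var: "\<And>(h::real^'n) i. measure_pmf.expectation p (\<lambda>R. (((transpose R ** R) *v h)$i)^2)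
                   \<le> (h$i)^2 + (norm h)^2 / b"
    and R_tail: "\<And>(h::real^'n) i \<delta>. 0 < \<delta> \<Longrightarrow> \<delta> < 1 \<Longrightarrow>
                   measure_pmf.prob p {R. \<bar>((transpose R ** R) *v h)$i - h$i\<bar> > norm h * ln (n / \<delta>) / sqrt b}
                   \<le> \<delta>"
    and b_large: "b \<ge> 1000 * (ln n)^2"
  shows
    "(norm (vdiv dt_s sbar) \<le> 2 * eps \<and>
     norm (vdiv dt_x xbar) \<le> 2 * eps \<and>
     norm (measure_pmf.expectation p (\<lambda>R. vdiv (dh_s R) sbar)) \<le> 2 * eps \<and>
     norm (measure_pmf.expectation p (\<lambda>R. vdiv (dh_x R) xbar)) \<le> 2 * eps \<and>
     norm (vdiv (dt_t - dbar_t) mubar) \<le> eps_mp * eps \<and>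
     norm (vdiv (dbar_t + dt_Phi) mubar) \<le> 5 * eps) \<and>
    (\<forall>i. measure_pmf.variance p (\<lambda>R. dh_x R $ i / xbar $ i) \<le> 2 * eps^2 / b \<and>
         measure_pmf.variance p (\<lambda>R. dh_s R $ i / sbar $ i) \<le> 2 * eps^2 / b) \<and>
    (infnorm (vdiv (xbar - xt) xbar) \<le> 2 * eps_mp \<and>
     infnorm (vdiv (sbar - st) sbar) \<le> 2 * eps_mp \<and>
     infnorm (vdiv dt_x xbar) \<le> 2 * eps \<and>
     infnorm (vdiv dt_s sbar) \<le> 2 * eps \<and>
     infnorm (vdiv dt_mu mubar) \<le> 5 * eps) \<and>
    (measure_pmf.prob p {R. infnorm (vdiv (dh_x R) xbar) \<le> 3 * eps \<and>
                            infnorm (vdiv (dh_s R) sbar) \<le> 3 * eps} \<ge> 1 - 1 / n^4)"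
proof -
  have e4: "(10::real) powr -4 = 1/10000" by (simp add: powr_minus_divide)
  have eps1: "eps < 1/10000" using eps e4 by simp
  have em1: "eps_mp < 1/10000" using eps_mp e4 by simp
  have nge2: "n \<ge> 2" using n2 by (simp add: n_def)
  have lnpos: "ln n > 0" using nge2 by simp
  have sqn: "sqrt n \<ge> 1" using nge2 by simp
  have xp: "\<And>i. xbar$i > 0" and sp: "\<And>i. sbar$i > 0" and wp: "\<And>i. wt$i > 0" and mp: "\<And>i. mut$i > 0"
    using pos by (auto simp: vpos_def)
  have mub: "\<And>i. mubar$i = xbar$i * sbar$i" by (simp add: mubar_def vmul_def)
  have wb: "\<And>i. wbar$i = xbar$i / sbar$i" by (simp add: wbar_def vdiv_def)
  have mubt: "\<And>i. 0.9*t \<le> mubar$i \<and> mubar$i \<le> 1.1*t"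
    using approx_t by (simp add: approx_vec_def)
  have mutb: "\<And>i. (1-eps_mp)*mubar$i \<le> mut$i \<and> mut$i \<le> (1+eps_mp)*mubar$i"
    using approx_mu by (simp add: approx_vec_def)
  have wtb: "\<And>i. (1-eps_mp)*wbar$i \<le> wt$i \<and> wt$i \<le> (1+eps_mp)*wbar$i"
    using approx_w by (simp add: approx_vec_def)
  have mut_t: "0.8998*t \<le> mut$i \<and> mut$i \<le> 1.1002*t" for i
  proof -
    have a: "eps_mp * mubar$i \<le> (1/10000) * (1.1*t)"
      using mubt[of i] em1 eps_mp t_pos by (intro mult_mono) auto
    show ?thesis using mubt[of i] mutb[of i] a t_pos by (auto simp: algebra_simps)
  qed
  define a where "a = eps / (3 * sqrt n)"
  have a_pos: "a > 0" using eps sqn by (simp add: a_def)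
  have asq: "a * sqrt n = eps / 3" using sqn by (simp add: a_def)
  have tn: "tnew / t - 1 = - a" using t_pos by (simp add: tnew_def a_def field_simps)
  have tnew_pos: "0 < tnew" and tnew_le: "tnew \<le> t"
  proof -
    have "eps < 3 * sqrt n" using eps1 sqn by linarith
    then have "eps / (3 * sqrt n) < 1" using sqn by (subst divide_less_eq_1_pos) auto
    then show "0 < tnew" "tnew \<le> t" using t_pos eps sqn by (auto simp: tnew_def)
  qed
  define sm where "sm i = sqrt (mut$i)" for i
  have sm_pos: "sm i > 0" for i using mp[of i] by (simp add: sm_def)
  have sm2: "sm i * sm i = mut$i" for i using mp[of i] by (simp add: sm_def)
  have sm_lo: "0.94 * sqrt t \<le> sm i" for i
    unfolding sm_def using mut_t[of i] t_pos
    by (intro real_le_rsqrt) (simp add: power_mult_distrib power_divide)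
  have sm_hi: "sm i \<le> 1.05 * sqrt t" for i
  proof -
    have "mut$i \<le> (1.05 * sqrt t)^2" using mut_t[of i] t_pos by (simp add: power_mult_distrib power_divide)
    then have "sqrt (mut$i) \<le> sqrt ((1.05 * sqrt t)^2)" by (rule real_sqrt_le_mono)
    then show ?thesis using t_pos by (simp add: sm_def)
  qed
  have xti: "xt$i = sqrt (wt$i * mut$i)" for i by (simp add: xt_def vsqrt_def vmul_def)
  have sti: "st$i = sqrt (mut$i / wt$i)" for i by (simp add: st_def vsqrt_def vdiv_def)
  have xtst: "sqrt (xt$i * st$i) = sm i" for i
  proof -
    have "xt$i * st$i = sqrt (mut$i * mut$i)" using wp[of i]
      by (simp add: xti sti real_sqrt_mult[symmetric])
    then show ?thesis using mp[of i] by (simp add: sm_def)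
  qed
  have XSh_mv: "(XSh *v u) $ i = u$i / sm i" for u i
    by (simp add: XSh_def vdiag_mv vinv_def vsqrt_def vmul_def xtst[unfolded vsqrt_def])
  define v where "v = (\<chi> i. dt_mu$i / sm i)"
  define h where "h = Pt *v v"
  define Y where "Y R = (transpose R ** R) *v h" for R :: "real^'n^'b"
  have XSv: "XSh *v dt_mu = v" by (simp add: vec_eq_iff XSh_mv v_def)
  have Pt_props: "transpose Pt = Pt" "Pt ** Pt = Pt"
    using proj_props[OF full_rank pos(3)] by (simp_all add: Pt_def)
  have hv: "norm h \<le> norm v" "norm (v - h) \<le> norm v"
    using proj_norm[OF Pt_props] by (simp_all add: h_def)
  have dtx_i: "dt_x$i = xt$i / sm i * (v$i - h$i)" for i
    by (simp add: dt_x_def XSv h_def vdiag_mv XSh_mv matrix_vector_mult_diff_rdistrib flip: matrix_vector_mul_assoc)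
  have dts_i: "dt_s$i = st$i / sm i * h$i" for i
    by (simp add: dt_s_def XSv h_def vdiag_mv XSh_mv flip: matrix_vector_mul_assoc)
  have dhx_i: "dh_x R $i = xt$i / sm i * (v$i - Y R $ i)" for i R
    by (simp add: dh_x_def Y_def XSv h_def vdiag_mv XSh_mv matrix_vector_mult_diff_rdistrib del: transpose_matrix_vector flip: matrix_vector_mul_assoc)
  have dhs_i: "dh_s R $i = st$i / sm i * Y R $ i" for i R
    by (simp add: dh_s_def Y_def XSv h_def vdiag_mv XSh_mv del: transpose_matrix_vector flip: matrix_vector_mul_assoc)
  define e where "e = eps_mp"
  have e0: "0 < e" and e1: "e < 1/10000" using eps_mp em1 by (auto simp: e_def)
  have ee: "e * e \<le> e / 10000" proof -
    have "e * e \<le> e * (1/10000)" using e0 e1 by (intro mult_left_mono) auto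
    then show ?thesis by simp
  qed
  have xbar2: "wbar$i * mubar$i = xbar$i * xbar$i" for i using sp[of i] by (simp add: wb mub)
  have sbar2: "sbar$i * sbar$i * wbar$i = mubar$i" for i using sp[of i] by (simp add: wb mub)
  have xt_lo: "(1-e) * xbar$i \<le> xt$i" for i
  proof -
    have "(1-e)*wbar$i * ((1-e)*mubar$i) \<le> wt$i * mut$i"
      using wtb[of i] mutb[of i] e1 wp[of i] xp[of i] sp[of i] by (intro mult_mono) (auto simp: e_def wb mub)
    moreover have "((1-e) * xbar$i)^2 = (1-e)*wbar$i * ((1-e)*mubar$i)"
    proof -
      have "((1-e) * xbar$i)^2 = (1-e)*(1-e) * (xbar$i*xbar$i)" by (simp add: power2_eq_square algebra_simps)
      also have "\<dots> = (1-e)*(1-e) * (wbar$i*mubar$i)" by (simp only: xbar2)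
      finally show ?thesis by (simp add: algebra_simps)
    qed
    ultimately have "((1-e) * xbar$i)^2 \<le> wt$i * mut$i" by simp
    then show ?thesis by (simp add: xti real_le_rsqrt)
  qed
  have xt_hi: "xt$i \<le> (1+e) * xbar$i" for i
  proof -
    have "wt$i * mut$i \<le> (1+e)*wbar$i * ((1+e)*mubar$i)"
      using wtb[of i] mutb[of i] e1 wp[of i] mp[of i] xp[of i] sp[of i] by (intro mult_mono) (auto simp: e_def wb mub)
    moreover have "((1+e) * xbar$i)^2 = (1+e)*wbar$i * ((1+e)*mubar$i)"
    proof -
      have "((1+e) * xbar$i)^2 = (1+e)*(1+e) * (xbar$i*xbar$i)" by (simp add: power2_eq_square algebra_simps)
      also have "\<dots> = (1+e)*(1+e) * (wbar$i*mubar$i)" by (simp only: xbar2)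
      finally show ?thesis by (simp add: algebra_simps)
    qed
    ultimately have "wt$i * mut$i \<le> ((1+e) * xbar$i)^2" by simp
    then have "sqrt (wt$i * mut$i) \<le> sqrt (((1+e) * xbar$i)^2)" by (rule real_sqrt_le_mono)
    then show ?thesis using e0 xp[of i] by (simp add: xti)
  qed
  have poly1: "(1-2*e)^2 * (1+e) \<le> 1 - e"
  proof -
    have "e*e*e \<le> (e / 10000) * e" using ee e0 by (intro mult_right_mono) auto
    also have "\<dots> \<le> e / 10000" using e0 e1 by (simp add: mult_le_cancel_left1)
    finally have "e*e*e \<le> e / 10000" .
    moreover have "(1-2*e)^2*(1+e) = 1 - 3*e + 4*(e*e*e)" by (simp add: power2_eq_square algebra_simps)
    ultimately show ?thesis using e0 by linarith
  qed
  have poly2: "1 + e \<le> (1+2*e)^2 * (1-e)"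
  proof -
    have "e*e*e \<le> (e / 10000) * e" using ee e0 by (intro mult_right_mono) auto
    also have "\<dots> \<le> e / 10000" using e0 e1 by (simp add: mult_le_cancel_left1)
    finally have "e*e*e \<le> e / 10000" .
    moreover have "(1+2*e)^2*(1-e) = 1 + 3*e - 4*(e*e*e)" by (simp add: power2_eq_square algebra_simps)
    ultimately show ?thesis using e0 by linarith
  qed
  have st_lo: "(1-2*e) * sbar$i \<le> st$i" for i
  proof -
    have "((1-2*e)* sbar$i)^2 * wt$i \<le> ((1-2*e)* sbar$i)^2 * ((1+e)*wbar$i)"
      using wtb[of i] by (intro mult_left_mono) (auto simp: e_def)
    also have "\<dots> = (1-2*e)^2 * (1+e) * (sbar$i * sbar$i * wbar$i)" by (simp add: power2_eq_square algebra_simps)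
    also have "\<dots> = (1-2*e)^2 * (1+e) * mubar$i" by (simp only: sbar2)
    also have "\<dots> \<le> (1-e) * mubar$i" using poly1 mubt[of i] t_pos by (intro mult_right_mono) auto
    also have "\<dots> \<le> mut$i" using mutb[of i] by (simp add: e_def)
    finally have "((1-2*e)* sbar$i)^2 \<le> mut$i / wt$i" using wp[of i] by (simp add: pos_le_divide_eq)
    then show ?thesis by (simp add: sti real_le_rsqrt)
  qed
  have st_hi: "st$i \<le> (1+2*e) * sbar$i" for i
  proof -
    have "mut$i \<le> (1+e) * mubar$i" using mutb[of i] by (simp add: e_def)
    also have "\<dots> \<le> (1+2*e)^2 * (1-e) * mubar$i" using poly2 mubt[of i] t_pos by (intro mult_right_mono) auto
    also have "\<dots> = (1+2*e)^2 * (1-e) * (sbar$i * sbar$i * wbar$i)" by (simp only: sbar2)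
    also have "\<dots> = ((1+2*e)* sbar$i)^2 * ((1-e)*wbar$i)" by (simp add: power2_eq_square algebra_simps)
    also have "\<dots> \<le> ((1+2*e)* sbar$i)^2 * wt$i"
      using wtb[of i] by (intro mult_left_mono) (auto simp: e_def)
    finally have "mut$i / wt$i \<le> ((1+2*e)* sbar$i)^2" using wp[of i] by (simp add: divide_le_eq)
    then have "sqrt (mut$i / wt$i) \<le> sqrt (((1+2*e)* sbar$i)^2)" by (rule real_sqrt_le_mono)
    then show ?thesis using e0 sp[of i] by (simp add: sti abs_of_pos)
  qed
  have sqt: "sqrt t > 0" using t_pos by simp
  define K where "K = 1.1 / sqrt t"
  have K_pos: "K > 0" using sqt by (simp add: K_def)
  have inv_sm: "1 / sm i \<le> 1 / (0.94 * sqrt t)" for i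
    using sm_lo[of i] sqt sm_pos[of i] by (intro divide_left_mono) auto
  have coef_le: "c / sm i \<le> K" if c0: "0 \<le> c" and c1: "c \<le> 1.0002" for c i
  proof -
    have "c / sm i = c * (1 / sm i)" by simp
    also have "\<dots> \<le> 1.0002 * (1 / (0.94 * sqrt t))"
      using c0 c1 inv_sm[of i] sm_pos[of i] by (intro mult_mono) auto
    also have "\<dots> \<le> K" unfolding K_def using sqt by (simp add: field_simps)
    finally show ?thesis .
  qed
  define cx where "cx i = xt$i / (sm i * xbar$i)" for i
  define cs where "cs i = st$i / (sm i * sbar$i)" for i
  have cx_b: "0 \<le> cx i \<and> cx i \<le> K" for i
  proof -
    have x1: "xt$i / xbar$i \<le> 1.0002"
    proof -
      have "(1+e) * xbar$i \<le> 1.0002 * xbar$i" using e1 xp[of i] by (intro mult_right_mono) auto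
      then have "xt$i \<le> 1.0002 * xbar$i" using xt_hi[of i] by linarith
      then show ?thesis using xp[of i] by (simp add: divide_le_eq)
    qed
    have x0: "0 \<le> xt$i / xbar$i" using xp[of i] wp[of i] mp[of i] by (simp add: xti)
    have "cx i = (xt$i / xbar$i) / sm i" by (simp add: cx_def mult.commute)
    then show ?thesis using coef_le[OF x0 x1, of i] divide_nonneg_pos[OF x0 sm_pos[of i]] by (simp only:)
  qed
  have cs_b: "0 \<le> cs i \<and> cs i \<le> K" for i
  proof -
    have x1: "st$i / sbar$i \<le> 1.0002"
    proof -
      have "(1+2*e) * sbar$i \<le> 1.0002 * sbar$i" using e1 sp[of i] by (intro mult_right_mono) auto
      then have "st$i \<le> 1.0002 * sbar$i" using st_hi[of i] by linarith
      then show ?thesis using sp[of i] by (simp add: divide_le_eq)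
    qed
    have x0: "0 \<le> st$i / sbar$i" using sp[of i] wp[of i] mp[of i] by (simp add: sti)
    have "cs i = (st$i / sbar$i) / sm i" by (simp add: cs_def mult.commute)
    then show ?thesis using coef_le[OF x0 x1, of i] divide_nonneg_pos[OF x0 sm_pos[of i]] by (simp only:)
  qed
  define cP where "cP = - (eps / 2) * tnew / norm g"
  have gpos: "norm g > 0" using g_nz by simp
  have dtPhi_i: "dt_Phi$i = cP * g$i" for i by (simp add: dt_Phi_def cP_def)
  have dtt_i: "dt_t$i = - a * mut$i" for i by (simp add: dt_t_def tn)
  have cPg: "\<bar>cP\<bar> * norm g = (eps/2) * tnew" using gpos eps tnew_pos by (simp add: cP_def abs_mult)
  define v1 where "v1 = (\<chi> i. - a * sm i)"
  define v2 where "v2 = (\<chi> i. cP * g$i / sm i)"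
  have vsplit: "v = v1 + v2"
  proof -
    have "dt_mu$i / sm i = - a * sm i + cP * g$i / sm i" for i
      using sm_pos[of i] sm2[of i] by (simp add: dt_mu_def dtPhi_i dtt_i field_simps)
    then show ?thesis by (simp add: vec_eq_iff v_def v1_def v2_def)
  qed
  have nv1: "norm v1 \<le> (7/20) * (eps * sqrt t)"
  proof -
    have "norm v1 \<le> (a * (1.05 * sqrt t)) * norm (\<chi> i::'n. (1::real))"
    proof (rule norm_scaled_le)
      show "0 \<le> a * (1.05 * sqrt t)" using a_pos sqt by simp
      fix i :: 'n
      show "\<bar>v1$i\<bar> \<le> a * (1.05 * sqrt t) * \<bar>(\<chi> i::'n. (1::real))$i\<bar>"
        using sm_hi[of i] sm_pos[of i] a_pos by (simp add: v1_def abs_mult)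
    qed
    also have "\<dots> = 1.05 * sqrt t * (a * sqrt n)" by (simp add: norm_const_vec n_def)
    also have "\<dots> = (7/20) * (eps * sqrt t)" by (simp add: asq)
    finally show ?thesis .
  qed
  have nv2: "norm v2 \<le> (27/50) * (eps * sqrt t)"
  proof -
    have "norm v2 \<le> (\<bar>cP\<bar> * (1 / (0.94 * sqrt t))) * norm g"
    proof (rule norm_scaled_le)
      show "0 \<le> \<bar>cP\<bar> * (1 / (0.94 * sqrt t))" using sqt by simp
      fix i :: 'n
      have "\<bar>v2$i\<bar> = \<bar>cP\<bar> * (1 / sm i) * \<bar>g$i\<bar>" using sm_pos[of i] by (simp add: v2_def abs_mult)
      also have "\<dots> \<le> \<bar>cP\<bar> * (1 / (0.94 * sqrt t)) * \<bar>g$i\<bar>"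
        using inv_sm[of i] by (intro mult_right_mono mult_left_mono) auto
      finally show "\<bar>v2$i\<bar> \<le> \<bar>cP\<bar> * (1 / (0.94 * sqrt t)) * \<bar>g$i\<bar>" .
    qed
    also have "\<dots> = (eps/2) * tnew / (0.94 * sqrt t)" using cPg by (simp add: field_simps)
    also have "\<dots> \<le> (eps/2) * t / (0.94 * sqrt t)" using tnew_le eps sqt by (intro divide_right_mono) auto
    also have "\<dots> = (eps/2) * (t / sqrt t) / 0.94" by simp
    also have "\<dots> = (eps/2) * sqrt t / 0.94" using t_pos by (simp add: real_div_sqrt)
    also have "\<dots> \<le> (27/50) * (eps * sqrt t)" using eps sqt by simp
    finally show ?thesis .
  qed
  have nv: "norm v \<le> eps * sqrt t"
  proof -
    have "0 \<le> eps * sqrt t" using eps sqt by simp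
    have "norm v \<le> norm v1 + norm v2" using norm_triangle_ineq[of v1 v2] vsplit by simp
    also have "\<dots> \<le> 7/20 * (eps * sqrt t) + 27/50 * (eps * sqrt t)" using nv1 nv2 by (rule add_mono)
    also have "\<dots> \<le> eps * sqrt t" using \<open>0 \<le> eps * sqrt t\<close> by linarith
    finally show ?thesis .
  qed
  have KV: "K * norm v \<le> 1.1 * eps"
  proof -
    have "K * norm v \<le> K * (eps * sqrt t)" using nv K_pos by (intro mult_left_mono) auto
    also have "\<dots> = 1.1 * eps" using sqt by (simp add: K_def)
    finally show ?thesis .
  qed
  have I: "\<And>f::real^'n^'b \<Rightarrow> 'z::{banach, second_countable_topology}. integrable p f"
    by (rule integrable_measure_pmf_finite[OF finite_R])
  have EY: "measure_pmf.expectation p Y = h" using R_mean[of h] by (simp add: Y_def[abs_def] del: transpose_matrix_vector)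
  have vdx: "vdiv dt_x xbar $ i = cx i * (v$i - h$i)" for i
    using sm_pos[of i] xp[of i] by (simp add: vdiv_def dtx_i cx_def)
  have vds: "vdiv dt_s sbar $ i = cs i * h$i" for i
    using sm_pos[of i] sp[of i] by (simp add: vdiv_def dts_i cs_def)
  have vdhx: "vdiv (dh_x R) xbar $ i = cx i * (v$i - Y R $ i)" for i R
    using sm_pos[of i] xp[of i] by (simp add: vdiv_def dhx_i cx_def)
  have vdhs: "vdiv (dh_s R) sbar $ i = cs i * Y R $ i" for i R
    using sm_pos[of i] sp[of i] by (simp add: vdiv_def dhs_i cs_def)
  have Kh: "K * norm h \<le> 1.1 * eps" using KV hv K_pos by (smt (verit) mult_left_mono)
  have Kvh: "K * norm (v - h) \<le> 1.1 * eps" using KV hv K_pos by (smt (verit) mult_left_mono)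
  have n1a: "norm (vdiv dt_s sbar) \<le> K * norm h"
    by (rule norm_scaled_le) (use K_pos cs_b in \<open>auto simp: vds abs_mult intro: mult_right_mono\<close>)
  have n1b: "norm (vdiv dt_x xbar) \<le> K * norm (v - h)"
    by (rule norm_scaled_le) (use K_pos cx_b in \<open>auto simp: vdx abs_mult intro: mult_right_mono\<close>)
  have E1c: "measure_pmf.expectation p (\<lambda>R. vdiv (dh_s R) sbar) = vdiv dt_s sbar"
  proof -
    have "(\<lambda>R. vdiv (dh_s R) sbar) = (\<lambda>R. vdiag (\<chi> i. cs i) *v Y R)"
      by (simp add: fun_eq_iff vec_eq_iff vdhs vdiag_mv)
    then have "measure_pmf.expectation p (\<lambda>R. vdiv (dh_s R) sbar) = vdiag (\<chi> i. cs i) *v measure_pmf.expectation p Y"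
      using integral_bounded_linear[OF matrix_vector_mul_bounded_linear I, of "vdiag (\<chi> i. cs i)" Y] by simp
    then show ?thesis by (simp add: EY vec_eq_iff vdiag_mv vds)
  qed
  have E1d: "measure_pmf.expectation p (\<lambda>R. vdiv (dh_x R) xbar) = vdiv dt_x xbar"
  proof -
    have "(\<lambda>R. vdiv (dh_x R) xbar) = (\<lambda>R. (\<chi> i. cx i * v$i) - vdiag (\<chi> i. cx i) *v Y R)"
      by (simp add: fun_eq_iff vec_eq_iff vdhx vdiag_mv algebra_simps)
    moreover have "measure_pmf.expectation p (\<lambda>R. vdiag (\<chi> i. cx i) *v Y R) = vdiag (\<chi> i. cx i) *v h"
      using integral_bounded_linear[OF matrix_vector_mul_bounded_linear I, of "vdiag (\<chi> i. cx i)" Y] EY by simp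
    ultimately show ?thesis by (simp add: I vec_eq_iff vdiag_mv vdx algebra_simps)
  qed
  have dbt_i: "dbar_t$i = - a * mubar$i" for i by (simp add: dbar_t_def tn)
  have mubar_pos: "mubar$i > 0" for i using mubt[of i] t_pos by linarith
  have n1e: "norm (vdiv (dt_t - dbar_t) mubar) \<le> eps_mp * eps"
  proof -
    have "norm (vdiv (dt_t - dbar_t) mubar) \<le> (a * e) * norm (\<chi> i::'n. (1::real))"
    proof (rule norm_scaled_le)
      show "0 \<le> a * e" using a_pos e0 by simp
      fix i :: 'n
      define q where "q = (mut$i - mubar$i) / mubar$i"
      have "vdiv (dt_t - dbar_t) mubar $ i = - a * q"
        by (simp add: q_def vdiv_def dtt_i dbt_i algebra_simps diff_divide_distrib)
      moreover have "\<bar>q\<bar> \<le> e"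
        using mutb[of i] mubar_pos[of i] by (simp add: q_def abs_le_iff divide_le_eq le_divide_eq e_def algebra_simps)
      then have "\<bar>- a * q\<bar> \<le> a * e" using a_pos by (simp add: abs_mult mult_left_mono)
      ultimately show "\<bar>vdiv (dt_t - dbar_t) mubar $ i\<bar> \<le> a * e * \<bar>(\<chi> i::'n. (1::real))$i\<bar>"
        by simp
    qed
    also have "\<dots> = e * (a * sqrt n)" by (simp add: norm_const_vec n_def)
    also have "\<dots> \<le> eps_mp * eps" using asq e0 eps by (simp add: e_def)
    finally show ?thesis .
  qed
  define u2 where "u2 = (\<chi> i. cP * g$i / mubar$i)"
  have nu2: "norm u2 \<le> 0.6 * eps"
  proof -
    have "norm u2 \<le> (\<bar>cP\<bar> / (0.9 * t)) * norm g"
    proof (rule norm_scaled_le)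
      show "0 \<le> \<bar>cP\<bar> / (0.9 * t)" using t_pos by simp
      fix i :: 'n
      have "1 / mubar$i \<le> 1 / (0.9 * t)" using mubt[of i] t_pos by (intro divide_left_mono) auto
      then have "\<bar>cP\<bar> * (1 / mubar$i) * \<bar>g$i\<bar> \<le> \<bar>cP\<bar> * (1 / (0.9 * t)) * \<bar>g$i\<bar>"
        by (intro mult_right_mono mult_left_mono) auto
      then show "\<bar>u2$i\<bar> \<le> \<bar>cP\<bar> / (0.9 * t) * \<bar>g$i\<bar>"
        using mubar_pos[of i] by (simp add: u2_def abs_mult)
    qed
    also have "\<dots> = (eps/2) * tnew / (0.9 * t)" using cPg by (simp add: field_simps)
    also have "\<dots> \<le> (eps/2) * t / (0.9 * t)" using tnew_le eps t_pos by (intro divide_right_mono) auto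
    also have "\<dots> \<le> 0.6 * eps" using t_pos eps by simp
    finally show ?thesis .
  qed
  have n1f: "norm (vdiv (dbar_t + dt_Phi) mubar) \<le> 5 * eps"
  proof -
    have "vdiv (dbar_t + dt_Phi) mubar = (\<chi> i::'n. - a) + u2"
    proof -
      have mnz: "mubar$i \<noteq> 0" for i using mubar_pos[of i] by simp
      show ?thesis by (simp add: vec_eq_iff vdiv_def dbt_i dtPhi_i u2_def diff_divide_distrib mnz)
    qed
    then have "norm (vdiv (dbar_t + dt_Phi) mubar) \<le> norm (\<chi> i::'n. - a) + norm u2"
      by (simp add: norm_triangle_ineq)
    also have "norm (\<chi> i::'n. - a) = eps / 3" using a_pos asq by (simp add: norm_const_vec n_def)
    finally show ?thesis using nu2 eps by simp
  qed
  have b_pos: "b > 0" by (simp add: b_def)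
  have var_x: "measure_pmf.variance p (\<lambda>R. dh_x R $ i / xbar $ i) \<le> 2 * eps^2 / b"
   and var_s: "measure_pmf.variance p (\<lambda>R. dh_s R $ i / sbar $ i) \<le> 2 * eps^2 / b" for i
  proof -
    have Ey: "measure_pmf.expectation p (\<lambda>R. Y R $ i) = h$i"
      using expect_comp[OF finite_R, of Y i] EY by simp
    have Ey2: "measure_pmf.expectation p (\<lambda>R. (Y R $ i)^2) \<le> (h$i)^2 + (norm h)^2 / b"
      using R_var[of h i] by (simp add: Y_def del: transpose_matrix_vector)
    have gen: "measure_pmf.variance p (\<lambda>R. \<alpha> + \<beta> * Y R $ i) \<le> 2 * eps^2 / b"
      if "0 \<le> \<bar>\<beta>\<bar>" "\<bar>\<beta>\<bar> \<le> K" for \<alpha> \<beta>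
    proof -
      have "measure_pmf.variance p (\<lambda>R. \<alpha> + \<beta> * Y R $ i) = \<beta>^2 * (measure_pmf.expectation p (\<lambda>R. (Y R $ i)^2) - (h$i)^2)"
        by (rule var_affine_pmf[OF finite_R Ey])
      also have "\<dots> \<le> K^2 * ((norm h)^2 / b)"
      proof (rule mult_mono)
        show "\<beta>^2 \<le> K^2" using that by (metis power2_abs power_mono)
        show "measure_pmf.expectation p (\<lambda>R. (Y R $ i)^2) - (h$i)^2 \<le> (norm h)^2 / b" using Ey2 by simp
        have v0: "0 \<le> measure_pmf.variance p (\<lambda>R. 0 + 1 * Y R $ i)" by (rule Bochner_Integration.integral_nonneg) simp
        have veq: "measure_pmf.variance p (\<lambda>R. 0 + 1 * Y R $ i) = 1^2 * (measure_pmf.expectation p (\<lambda>R. (Y R $ i)^2) - (h$i)^2)"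
          by (rule var_affine_pmf[OF finite_R Ey])
        from v0 veq show "0 \<le> measure_pmf.expectation p (\<lambda>R. (Y R $ i)^2) - (h$i)^2"
          by (simp only: power_one mult_1)
      qed (use b_pos in auto)
      also have "\<dots> = (K * norm h)^2 / b" by (simp add: power_mult_distrib)
      also have "\<dots> \<le> (1.1 * eps)^2 / b"
        using Kh K_pos b_pos by (intro divide_right_mono power_mono) auto
      also have "\<dots> \<le> 2 * eps^2 / b" using b_pos by (intro divide_right_mono) (auto simp: power_mult_distrib power_divide)
      finally show ?thesis .
    qed
    have "\<And>R. dh_x R $ i / xbar $ i = cx i * v$i + (- cx i) * Y R $ i"
      using vdhx by (auto simp: vdiv_def algebra_simps)
    then show "measure_pmf.variance p (\<lambda>R. dh_x R $ i / xbar $ i) \<le> 2 * eps^2 / b"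
      by (simp only:) (rule gen, use cx_b[of i] in auto)
    have "\<And>R. dh_s R $ i / sbar $ i = 0 + cs i * Y R $ i"
      using vdhs by (auto simp: vdiv_def algebra_simps)
    then show "measure_pmf.variance p (\<lambda>R. dh_s R $ i / sbar $ i) \<le> 2 * eps^2 / b"
      by (simp only:) (rule gen, use cs_b[of i] in auto)
  qed
  have i3a: "infnorm (vdiv (xbar - xt) xbar) \<le> 2 * eps_mp"
  proof (rule infnorm_le_cart)
    fix i
    have "\<bar>xbar$i - xt$i\<bar> \<le> e * xbar$i" using xt_lo[of i] xt_hi[of i] by (simp add: abs_le_iff algebra_simps)
    then have "\<bar>(xbar$i - xt$i) / xbar$i\<bar> \<le> e" using xp[of i] by (simp add: abs_divide divide_le_eq)
    then show "\<bar>vdiv (xbar - xt) xbar $ i\<bar> \<le> 2 * eps_mp" using e0 by (simp add: vdiv_def e_def)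
  qed
  have i3b: "infnorm (vdiv (sbar - st) sbar) \<le> 2 * eps_mp"
  proof (rule infnorm_le_cart)
    fix i
    have "\<bar>sbar$i - st$i\<bar> \<le> (2*e) * sbar$i" using st_lo[of i] st_hi[of i] by (simp add: abs_le_iff algebra_simps)
    then have "\<bar>(sbar$i - st$i) / sbar$i\<bar> \<le> 2*e" using sp[of i] by (simp add: abs_divide divide_le_eq)
    then show "\<bar>vdiv (sbar - st) sbar $ i\<bar> \<le> 2 * eps_mp" by (simp add: vdiv_def e_def)
  qed
  have a_le: "a \<le> eps / 3" using sqn eps by (simp add: a_def field_simps)
  have i3e: "infnorm (vdiv dt_mu mubar) \<le> 5 * eps"
  proof (rule infnorm_le_cart)
    fix i
    have "(1+eps_mp)*mubar$i \<le> 2*mubar$i" using e1 mubar_pos[of i] by (intro mult_right_mono) (auto simp: e_def)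
    then have "mut$i \<le> 2*mubar$i" using mutb[of i] by linarith
    define q where "q = mut$i / mubar$i"
    have r: "q \<le> 2" using \<open>mut$i \<le> 2*mubar$i\<close> mubar_pos[of i] by (simp add: q_def divide_le_eq)
    have r0: "0 \<le> q" using mp[of i] mubar_pos[of i] by (simp add: q_def)
    have "vdiv dt_mu mubar $ i = - a * q + u2$i"
      using mubar_pos[of i] by (simp add: q_def vdiv_def dt_mu_def dtt_i dtPhi_i u2_def add_divide_distrib diff_divide_distrib)
    moreover have "\<bar>a * q\<bar> \<le> a * 2" using r r0 a_pos by (simp add: abs_mult mult_left_mono)
    moreover have "\<bar>u2$i\<bar> \<le> 0.6 * eps" using component_le_norm_cart[of u2 i] nu2 by linarith
    ultimately show "\<bar>vdiv dt_mu mubar $ i\<bar> \<le> 5 * eps" using a_le eps by (simp add: abs_le_iff) linarith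
  qed
  define del where "del = 1 / n^5"
  have del0: "0 < del" and del1: "del < 1" using nge2 by (auto simp: del_def)
  have lnd: "ln (n / del) = 6 * ln n" using nge2 by (simp add: del_def ln_mult ln_realpow)
  have sqb: "31 * ln n \<le> sqrt b"
  proof -
    have "(31 * ln n)^2 = 961 * (ln n)^2" by (simp add: power_mult_distrib)
    then have "(31 * ln n)^2 \<le> b" using b_large zero_le_power2[of "ln n"] by linarith
    then show ?thesis by (rule real_le_rsqrt)
  qed
  have fac: "ln (n / del) / sqrt b \<le> 0.2"
  proof -
    have "sqrt b > 0" using b_pos by simp
    then show ?thesis using sqb lnpos unfolding lnd by (simp add: divide_le_eq)
  qed
  define E where "E i = {R. \<bar>Y R $ i - h$i\<bar> > norm h * ln (n / del) / sqrt b}" for i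
  have PE: "measure_pmf.prob p (E i) \<le> del" for i
    using R_tail[OF del0 del1, of h i] by (simp add: E_def Y_def del: transpose_matrix_vector)
  have good: "infnorm (vdiv (dh_x R) xbar) \<le> 3 * eps \<and> infnorm (vdiv (dh_s R) sbar) \<le> 3 * eps"
    if R: "R \<notin> (\<Union>i. E i)" for R
  proof -
    have dev: "\<bar>Y R $ i - h$i\<bar> \<le> 0.2 * norm h" for i
    proof -
      have "\<bar>Y R $ i - h$i\<bar> \<le> norm h * ln (n / del) / sqrt b" using R by (simp add: E_def not_less)
      also have "\<dots> = norm h * (ln (n / del) / sqrt b)" by simp
      also have "\<dots> \<le> norm h * 0.2" using fac by (intro mult_left_mono) auto
      finally show ?thesis by simp
    qed
    have K12: "K * (1.2 * norm v) \<le> 3 * eps" using KV eps by simp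
    show ?thesis
    proof
      show "infnorm (vdiv (dh_x R) xbar) \<le> 3 * eps"
      proof (rule infnorm_le_cart)
        fix i
        have "\<bar>v$i - Y R $ i\<bar> \<le> \<bar>(v - h)$i\<bar> + \<bar>Y R $ i - h$i\<bar>" by simp
        also have "\<dots> \<le> norm (v - h) + 0.2 * norm h" using component_le_norm_cart[of "v - h" i] dev[of i] by linarith
        also have "\<dots> \<le> 1.2 * norm v" using hv by linarith
        finally have q: "\<bar>v$i - Y R $ i\<bar> \<le> 1.2 * norm v" .
        have "\<bar>vdiv (dh_x R) xbar $ i\<bar> = cx i * \<bar>v$i - Y R $ i\<bar>" using cx_b[of i] by (simp add: vdhx abs_mult)
        also have "\<dots> \<le> K * (1.2 * norm v)" using cx_b[of i] q by (intro mult_mono) auto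
        finally show "\<bar>vdiv (dh_x R) xbar $ i\<bar> \<le> 3 * eps" using K12 by linarith
      qed
      show "infnorm (vdiv (dh_s R) sbar) \<le> 3 * eps"
      proof (rule infnorm_le_cart)
        fix i
        have "\<bar>Y R $ i\<bar> \<le> \<bar>h$i\<bar> + \<bar>Y R $ i - h$i\<bar>" by simp
        also have "\<dots> \<le> norm h + 0.2 * norm h" using component_le_norm_cart[of h i] dev[of i] by linarith
        also have "\<dots> \<le> 1.2 * norm v" using hv by linarith
        finally have q: "\<bar>Y R $ i\<bar> \<le> 1.2 * norm v" .
        have "\<bar>vdiv (dh_s R) sbar $ i\<bar> = cs i * \<bar>Y R $ i\<bar>" using cs_b[of i] by (simp add: vdhs abs_mult)
        also have "\<dots> \<le> K * (1.2 * norm v)" using cs_b[of i] q by (intro mult_mono) auto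
        finally show "\<bar>vdiv (dh_s R) sbar $ i\<bar> \<le> 3 * eps" using K12 by linarith
      qed
    qed
  qed
  have i4: "measure_pmf.prob p {R. infnorm (vdiv (dh_x R) xbar) \<le> 3 * eps \<and>
                            infnorm (vdiv (dh_s R) sbar) \<le> 3 * eps} \<ge> 1 - 1 / n^4"
  proof -
    have "measure_pmf.prob p (\<Union>i. E i) \<le> (\<Sum>i\<in>UNIV. measure_pmf.prob p (E i))"
      by (rule measure_pmf.finite_measure_subadditive_finite) auto
    also have "\<dots> \<le> (\<Sum>i\<in>(UNIV::'n set). del)" by (rule sum_mono) (rule PE)
    also have "\<dots> = 1 / n^4" using nge2 by (simp add: del_def n_def power_eq_if)
    finally have u: "measure_pmf.prob p (\<Union>i. E i) \<le> 1 / n^4" .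
    have "1 - 1 / n^4 \<le> 1 - measure_pmf.prob p (\<Union>i. E i)" using u by simp
    also have "\<dots> = measure_pmf.prob p (space (measure_pmf p) - (\<Union>i. E i))"
      by (rule measure_pmf.prob_compl[symmetric]) simp
    also have "\<dots> \<le> measure_pmf.prob p {R. infnorm (vdiv (dh_x R) xbar) \<le> 3 * eps \<and>
                            infnorm (vdiv (dh_s R) sbar) \<le> 3 * eps}"
      by (rule measure_pmf.finite_measure_mono) (use good in auto)
    finally show ?thesis .
  qed
  have i3c: "infnorm (vdiv dt_x xbar) \<le> 2 * eps" using infnorm_le_norm[of "vdiv dt_x xbar"] n1b Kvh eps(1) by linarith
  have i3d: "infnorm (vdiv dt_s sbar) \<le> 2 * eps" using infnorm_le_norm[of "vdiv dt_s sbar"] n1a Kh eps(1) by linarith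
  show ?thesis
    using n1a n1b Kh Kvh E1c E1d n1e n1f var_x var_s i3a i3b i3c i3d i3e i4 eps by auto
qed

end
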